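(* For every $p\in[0,1/2)$, the noisy sorting capacity satisfies $C(p)\le 1-H(p)$.
   Context: Noisy sorting problem. Fix $p\in[0,1/2)$. Let $\theta_1,\ldots,\theta_n$ be distinct real numbers; their ordering is the permutation $\pi$ of $[n]$ with $\theta_{\pi(1)}<\cdots<\theta_{\pi(n)}$. At time step $k$ an agent submits a query $(U_k,V_k)=(\theta_i,\theta_j)$, $i\neq j$, and receives $Y_k=\mathbb{1}_{\{U_k<V_k\}}\oplus Z_k$, with $Z_k$ i.i.d. $\mathrm{Bern}(p)$ independent of everything else. An adaptive querying strategy is a causal (possibly randomized) rule $(U_k,V_k)=f_k(Y^{k-1},U^{k-1},V^{k-1})$ with a stopping time $M$ (number of queries) which may depend on the responses. An $(R,n)$ noisy sorting code consists of such a strategy and an estimator $\hat\Pi=\hat\pi(Y^M,U^M,V^M)$, with $\mathbb{E}[M]=\frac{n\log_2 n}{R}$. A rate $R$ is achievable if there is a sequence (indexed by $n$) of $(R,n)$ noisy sorting codes with $\lim_{n\to\infty}\max_\pi\mathbb{P}\{\hat\Pi\neq\pi\}=0$; $C(p)$ is the supremum of achievable rates. $H(p)=-p\log_2 p-(1-p)\log_2(1-p)$. *)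

theory Defs
  imports "HOL-Probability.Probability" "HOL-Combinatorics.Permutations"
begin

text \<open>Items are labelled 0..n-1; the ordering is a permutation pi of
  {..<n}: item pi k is the k-th smallest, so item i is smaller than item j iff
  inv pi i < inv pi j.
  A history is the list of (query, response) triples (U_k, V_k, Y_k).\<close>

type_synonym ns_hist = "(nat \<times> nat \<times> bool) list"

text \<open>All the
  randomization of the agent is collected in a seed s drawn from a probability
  measure on the reals (seed_dist).\<close>

record ns_code =
  qry :: "real \<Rightarrow> ns_hist \<Rightarrow> nat \<times> nat"
  stp :: "real \<Rightarrow> ns_hist \<Rightarrow> bool"
  est :: "ns_hist \<Rightarrow> (nat \<Rightarrow> nat)"
  seed_dist :: "real measure"

text \<open>History after k queries, given ordering pi, seed s and noise stream z
  (z !! k = Z_{k+1}).  The response is 1{U<V} xor Z.\<close>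

fun ns_hist :: "(nat \<Rightarrow> nat) \<Rightarrow> ns_code \<Rightarrow> real \<Rightarrow> bool stream \<Rightarrow> nat \<Rightarrow> ns_hist" where
  "ns_hist \<pi> c s z 0 = []"
| "ns_hist \<pi> c s z (Suc k) =
     (let h = ns_hist \<pi> c s z k; q = qry c s h
      in h @ [(fst q, snd q, (inv \<pi> (fst q) < inv \<pi> (snd q)) \<noteq> z !! k)])"

definition ns_M :: "(nat \<Rightarrow> nat) \<Rightarrow> ns_code \<Rightarrow> real \<Rightarrow> bool stream \<Rightarrow> enat" where
  "ns_M \<pi> c s z =
     (if \<exists>k. stp c s (ns_hist \<pi> c s z k)
      then enat (LEAST k. stp c s (ns_hist \<pi> c s z k)) else \<infinity>)"

definition ns_space :: "real \<Rightarrow> ns_code \<Rightarrow> (real \<times> bool stream) measure" where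
  "ns_space p c = seed_dist c \<Otimes>\<^sub>M stream_space (measure_pmf (bernoulli_pmf p))"

definition ns_error :: "real \<Rightarrow> ns_code \<Rightarrow> (nat \<Rightarrow> nat) \<Rightarrow> real" where
  "ns_error p c \<pi> = measure (ns_space p c)
     {\<omega> \<in> space (ns_space p c).
        ns_M \<pi> c (fst \<omega>) (snd \<omega>) = \<infinity> \<or>
        est c (ns_hist \<pi> c (fst \<omega>) (snd \<omega>) (the_enat (ns_M \<pi> c (fst \<omega>) (snd \<omega>)))) \<noteq> \<pi>}"

definition ns_max_error :: "real \<Rightarrow> nat \<Rightarrow> ns_code \<Rightarrow> real" where
  "ns_max_error p n c = Max ((\<lambda>\<pi>. ns_error p c \<pi>) ` {\<pi>. \<pi> permutes {..<n}})"

definition is_ns_code :: "real \<Rightarrow> real \<Rightarrow> nat \<Rightarrow> ns_code \<Rightarrow> bool" where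
  "is_ns_code p R n c \<longleftrightarrow>
     prob_space (seed_dist c) \<and> sets (seed_dist c) = sets borel \<and>
     (\<forall>h. (\<lambda>s. qry c s h) \<in> measurable (seed_dist c) (count_space UNIV)) \<and>
     (\<forall>h. (\<lambda>s. stp c s h) \<in> measurable (seed_dist c) (count_space UNIV)) \<and>
     (\<forall>s h. fst (qry c s h) < n \<and> snd (qry c s h) < n \<and> fst (qry c s h) \<noteq> snd (qry c s h)) \<and>
     (\<forall>\<pi>. \<pi> permutes {..<n} \<longrightarrow>
        (\<integral>\<^sup>+ \<omega>. ennreal_of_enat (ns_M \<pi> c (fst \<omega>) (snd \<omega>)) \<partial>ns_space p c)
          \<le> ennreal (real n * log 2 (real n) / R))"

definition ns_achievable :: "real \<Rightarrow> real \<Rightarrow> bool" where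
  "ns_achievable p R \<longleftrightarrow> R > 0 \<and>
     (\<exists>c :: nat \<Rightarrow> ns_code. (\<forall>n\<ge>2. is_ns_code p R n (c n)) \<and>
        (\<lambda>n. ns_max_error p n (c n)) \<longlonglongrightarrow> 0)"

definition ns_capacity :: "real \<Rightarrow> ereal" where
  "ns_capacity p = Sup (ereal ` {R. ns_achievable p R})"

definition bin_entropy :: "real \<Rightarrow> real" where
  "bin_entropy p = - p * log 2 p - (1 - p) * log 2 (1 - p)"

end

theory Submission
  imports Defs
begin


definition wt :: "real \<Rightarrow> bool list \<Rightarrow> real" where
  "wt p xs = prod_list (map (\<lambda>x. if x then p else 1 - p) xs)"

lemma wt_Nil[simp]: "wt p [] = 1" and wt_Cons[simp]: "wt p (x # xs) = (if x then p else 1 - p) * wt p xs"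
  by (simp_all add: wt_def)

lemma wt_nonneg: "0 \<le> p \<Longrightarrow> p \<le> 1 \<Longrightarrow> 0 \<le> wt p xs"
  by (induction xs) auto

lemma finite_len: "finite {xs :: bool list. length xs = L}"
  using finite_lists_length_eq[of "UNIV :: bool set" L] by simp

lemma len_Suc_eq: "{xs :: bool list. length xs = Suc L} = (\<lambda>(x,xs). x # xs) ` (UNIV \<times> {xs. length xs = L})"
  by (auto simp: length_Suc_conv image_iff)

lemma sum_len_Suc:
  fixes f :: "bool list \<Rightarrow> 'b::comm_monoid_add"
  shows "(\<Sum>xs\<in>{xs. length xs = Suc L}. f xs) = (\<Sum>xs\<in>{xs. length xs = L}. f (True # xs) + f (False # xs))"
proof -
  have "(\<Sum>xs\<in>{xs. length xs = Suc L}. f xs) = (\<Sum>y\<in>UNIV \<times> {xs. length xs = L}. f ((\<lambda>(x,xs). x # xs) y))"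
    unfolding len_Suc_eq by (subst sum.reindex) (auto simp: inj_on_def)
  also have "\<dots> = (\<Sum>x\<in>UNIV. \<Sum>xs\<in>{xs. length xs = L}. f (x # xs))"
    by (simp add: sum.cartesian_product split_def)
  also have "\<dots> = (\<Sum>xs\<in>{xs. length xs = L}. f (True # xs) + f (False # xs))"
    by (simp add: UNIV_bool sum.distrib add.commute)
  finally show ?thesis .
qed

lemma stake_integral:
  assumes p: "0 \<le> p" "p \<le> 1" and g: "\<And>xs. 0 \<le> g xs"
  shows "(\<integral>\<^sup>+z. ennreal (g (stake L z)) \<partial>stream_space (measure_pmf (bernoulli_pmf p)))
         = ennreal (\<Sum>xs\<in>{xs. length xs = L}. g xs * wt p xs)"
  using g
proof (induction L arbitrary: g)
  case 0
  interpret S: prob_space "stream_space (measure_pmf (bernoulli_pmf p))"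
    by (rule prob_space.prob_space_stream_space[OF prob_space_measure_pmf])
  have "{xs :: bool list. length xs = 0} = {[]}" by auto
  then show ?case by (simp add: S.emeasure_space_1)
next
  case (Suc L)
  have "(\<integral>\<^sup>+z. ennreal (g (stake (Suc L) z)) \<partial>stream_space (measure_pmf (bernoulli_pmf p)))
     = (\<integral>\<^sup>+x. (\<integral>\<^sup>+X. ennreal (g (stake (Suc L) (x ## X))) \<partial>stream_space (measure_pmf (bernoulli_pmf p))) \<partial>measure_pmf (bernoulli_pmf p))"
    by (rule prob_space.nn_integral_stream_space[OF prob_space_measure_pmf]) measurable
  also have "\<dots> = (\<integral>\<^sup>+x. ennreal (\<Sum>xs\<in>{xs. length xs = L}. g (x # xs) * wt p xs) \<partial>measure_pmf (bernoulli_pmf p))"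
    using Suc.IH[of "\<lambda>xs. g (_ # xs)"] Suc.prems by simp
  also have "\<dots> = (\<Sum>x\<in>UNIV. ennreal (\<Sum>xs\<in>{xs. length xs = L}. g (x # xs) * wt p xs) * pmf (bernoulli_pmf p) x)"
    by (rule nn_integral_measure_pmf_support) auto
  also have "\<dots> = ennreal ((\<Sum>xs\<in>{xs. length xs = L}. g (True # xs) * wt p xs) * p
        + (\<Sum>xs\<in>{xs. length xs = L}. g (False # xs) * wt p xs) * (1 - p))"
    using p Suc.prems
    by (simp add: UNIV_bool ennreal_mult'' ennreal_plus sum_nonneg wt_nonneg)
  also have "\<dots> = ennreal (\<Sum>xs\<in>{xs. length xs = Suc L}. g xs * wt p xs)"
    by (simp add: sum_len_Suc sum.distrib sum_distrib_right sum_distrib_left sum_subtractf algebra_simps)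
  finally show ?case .
qed



definition cnt :: "bool list \<Rightarrow> nat" where "cnt xs = length (filter id xs)"

lemma cnt_simps[simp]: "cnt [] = 0" "cnt (x # xs) = (if x then Suc (cnt xs) else cnt xs)"
  by (simp_all add: cnt_def)

lemma S0: "(\<Sum>xs\<in>{xs. length xs = L}. wt p xs) = 1"
  by (induction L) (auto simp: sum_len_Suc sum.distrib sum_distrib_left[symmetric] algebra_simps
        intro: sum.neutral elim: length_0_conv[THEN iffD1])

lemma S1: "(\<Sum>xs\<in>{xs. length xs = L}. wt p xs * real (cnt xs)) = real L * p"
proof (induction L)
  case 0 then show ?case by (simp add: length_0_conv) 
next
  case (Suc L)
  have "(\<Sum>xs\<in>{xs. length xs = Suc L}. wt p xs * real (cnt xs)) =
     p * (\<Sum>xs\<in>{xs. length xs = L}. wt p xs) + (\<Sum>xs\<in>{xs. length xs = L}. wt p xs * real (cnt xs))"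
    by (simp add: sum_len_Suc sum.distrib sum_distrib_left algebra_simps)
  then show ?case using Suc S0[where L=L and p=p] by (simp add: algebra_simps)
qed

lemma S2: "(\<Sum>xs\<in>{xs. length xs = L}. wt p xs * real (cnt xs)^2) = real L * p + real L * (real L - 1) * p^2"
proof (induction L)
  case 0 then show ?case by (simp add: length_0_conv) 
next
  case (Suc L)
  have "(\<Sum>xs\<in>{xs. length xs = Suc L}. wt p xs * real (cnt xs)^2) =
     p * (\<Sum>xs\<in>{xs. length xs = L}. wt p xs) + 2 * p * (\<Sum>xs\<in>{xs. length xs = L}. wt p xs * real (cnt xs))
      + (\<Sum>xs\<in>{xs. length xs = L}. wt p xs * real (cnt xs)^2)"
    by (simp add: sum_len_Suc sum.distrib sum_distrib_left algebra_simps power2_eq_square)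
  then show ?case using Suc S0[where L=L and p=p] S1[where L=L and p=p] by (simp add: algebra_simps power2_eq_square)
qed

lemma Svar: "(\<Sum>xs\<in>{xs. length xs = L}. wt p xs * (real (cnt xs) - real L * p)^2) = real L * p * (1 - p)"
proof -
  have "(\<Sum>xs\<in>{xs. length xs = L}. wt p xs * (real (cnt xs) - real L * p)^2)
    = (\<Sum>xs\<in>{xs. length xs = L}. wt p xs * real (cnt xs)^2) - 2 * real L * p * (\<Sum>xs\<in>{xs. length xs = L}. wt p xs * real (cnt xs))
      + (real L * p)^2 * (\<Sum>xs\<in>{xs. length xs = L}. wt p xs)"
    by (simp add: power2_diff sum.distrib sum_subtractf sum_distrib_left algebra_simps)
  then show ?thesis using S0[where L=L and p=p] S1[where L=L and p=p] S2[where L=L and p=p] by (simp add: algebra_simps power2_eq_square)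
qed

lemma cheb:
  assumes p: "0 \<le> p" "p \<le> 1" and th: "\<theta> < p" and L: "L > 0"
  shows "(\<Sum>xs\<in>{xs. length xs = L}. if real (cnt xs) < \<theta> * real L then wt p xs else 0)
     \<le> p * (1 - p) / ((p - \<theta>)^2 * real L)"
proof -
  have pos: "(p - \<theta>)^2 * real L ^ 2 > 0" using th L by simp
  have "(\<Sum>xs\<in>{xs. length xs = L}. if real (cnt xs) < \<theta> * real L then wt p xs else 0)
     \<le> (\<Sum>xs\<in>{xs. length xs = L}. wt p xs * (real (cnt xs) - real L * p)^2 / ((p - \<theta>)^2 * real L ^ 2))"
  proof (rule sum_mono)
    fix xs :: "bool list"
    have w: "0 \<le> wt p xs" using p by (rule wt_nonneg)
    show "(if real (cnt xs) < \<theta> * real L then wt p xs else 0) \<le> wt p xs * (real (cnt xs) - real L * p)^2 / ((p - \<theta>)^2 * real L ^ 2)"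
    proof (cases "real (cnt xs) < \<theta> * real L")
      case True
      then have "(p - \<theta>) * real L \<le> real L * p - real (cnt xs)" by (simp add: algebra_simps)
      moreover have "0 \<le> (p - \<theta>) * real L" using th by simp
      ultimately have "((p - \<theta>) * real L)^2 \<le> (real L * p - real (cnt xs))^2"
        by (rule power_mono)
      then have "1 \<le> (real (cnt xs) - real L * p)^2 / ((p - \<theta>)^2 * real L ^ 2)"
        using pos by (simp add: power_mult_distrib power2_commute)
      then have "wt p xs * 1 \<le> wt p xs * ((real (cnt xs) - real L * p)^2 / ((p - \<theta>)^2 * real L ^ 2))"
        using w by (rule mult_left_mono)
      then show ?thesis using True by simp
    next
      case False then show ?thesis using w pos by simp
    qed
  qed
  also have "\<dots> = real L * p * (1 - p) / ((p - \<theta>)^2 * real L ^ 2)"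
    by (simp add: sum_divide_distrib[symmetric] Svar)
  also have "\<dots> = p * (1 - p) / ((p - \<theta>)^2 * real L)"
  proof -
    have "real L * p * (1 - p) / ((p - \<theta>)^2 * real L ^ 2) = (real L * (p * (1 - p))) / (real L * ((p - \<theta>)^2 * real L))"
      by (simp add: power2_eq_square algebra_simps)
    also have "\<dots> = p * (1 - p) / ((p - \<theta>)^2 * real L)" using L by (subst mult_divide_mult_cancel_left) auto
    finally show ?thesis .
  qed
  finally show ?thesis .
qed



lemma wt_eq: "wt p xs = p ^ cnt xs * (1 - p) ^ (length xs - cnt xs)"
proof (induction xs)
  case (Cons x xs)
  have "cnt xs \<le> length xs" by (simp add: cnt_def)
  then show ?case using Cons by (auto simp: Suc_diff_le)
qed simp

lemma wt_le1: "0 \<le> p \<Longrightarrow> p \<le> 1 \<Longrightarrow> wt p xs \<le> 1"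
  by (induction xs) (auto intro: mult_le_one wt_nonneg)

lemma pow_as_powr: "0 < x \<Longrightarrow> x ^ k = 2 powr (real k * log 2 x)"
proof -
  assume x: "0 < x"
  have "x ^ k = (2 powr log 2 x) powr real k" using x by (simp add: powr_realpow)
  also have "\<dots> = 2 powr (real k * log 2 x)" by (simp add: powr_powr mult.commute)
  finally show ?thesis .
qed

lemma wt_typical:
  assumes p: "0 \<le> p" "p < 1/2" and d: "\<delta> > 0"
  shows "\<exists>\<theta> < p. \<forall>xs. real (cnt xs) \<ge> \<theta> * real (length xs) \<longrightarrow>
           wt p xs \<le> 2 powr (real (length xs) * (\<delta> - bin_entropy p))"
proof (cases "p = 0")
  case True
  have "bin_entropy p = 0" using True by (simp add: bin_entropy_def)
  then show ?thesis using True d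
    by (intro exI[of _ "-1"]) (auto intro!: order.trans[OF wt_le1] ge_one_powr_ge_zero)
next
  case False
  then have p0: "0 < p" using p by simp
  define a where "a = log 2 p"
  define b where "b = log 2 (1 - p)"
  have ab: "a < b" using p p0 by (simp add: a_def b_def)
  define \<theta> where "\<theta> = p - \<delta> / (b - a)"
  have "\<theta> < p" using ab d by (simp add: \<theta>_def)
  moreover have "wt p xs \<le> 2 powr (real (length xs) * (\<delta> - bin_entropy p))"
    if c: "real (cnt xs) \<ge> \<theta> * real (length xs)" for xs
  proof -
    define L where "L = length xs"
    define k where "k = cnt xs"
    have kL: "k \<le> L" by (simp add: k_def L_def cnt_def)
    have "wt p xs = 2 powr (real k * a + real (L - k) * b)"
      using p0 p by (simp add: wt_eq pow_as_powr a_def b_def powr_add k_def L_def)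
    also have "\<dots> \<le> 2 powr (real L * (\<delta> - bin_entropy p))"
    proof (rule powr_mono)
      have "real k * a + real (L - k) * b = real L * b - real k * (b - a)"
        using kL by (simp add: of_nat_diff algebra_simps)
      also have "\<dots> \<le> real L * b - \<theta> * real L * (b - a)"
        using c ab by (simp add: k_def L_def mult_right_mono)
      also have "\<dots> = real L * (\<delta> - bin_entropy p)"
        using ab by (simp add: \<theta>_def bin_entropy_def a_def[symmetric] b_def[symmetric] field_simps)
      finally show "real k * a + real (L - k) * b \<le> real L * (\<delta> - bin_entropy p)" .
    qed simp
    finally show ?thesis by (simp add: L_def)
  qed
  ultimately show ?thesis by blast
qed



fun histL :: "(nat \<Rightarrow> nat) \<Rightarrow> ns_code \<Rightarrow> real \<Rightarrow> bool list \<Rightarrow> nat \<Rightarrow> ns_hist" where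
  "histL \<pi> c s xs 0 = []"
| "histL \<pi> c s xs (Suc k) =
     (let h = histL \<pi> c s xs k; q = qry c s h
      in h @ [(fst q, snd q, (inv \<pi> (fst q) < inv \<pi> (snd q)) \<noteq> xs ! k)])"

lemma hist_histL: "k \<le> L \<Longrightarrow> ns_hist \<pi> c s z k = histL \<pi> c s (stake L z) k"
  by (induction k) (auto simp: Let_def)

lemma length_histL[simp]: "length (histL \<pi> c s xs k) = k"
  by (induction k) (auto simp: Let_def)

lemma histL_prefix: "k \<le> k' \<Longrightarrow> take k (histL \<pi> c s xs k') = histL \<pi> c s xs k"
proof (induction k')
  case 0 then show ?case by simp
next
  case (Suc k')
  show ?case
  proof (cases "k = Suc k'")
    case True then show ?thesis by (simp add: Let_def)
  next
    case False
    then have "k \<le> k'" using Suc.prems by simp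
    then show ?thesis using Suc.IH by (simp add: Let_def)
  qed
qed

lemma histL_nth: "i < k \<Longrightarrow> histL \<pi> c s xs k ! i =
   (fst (qry c s (histL \<pi> c s xs i)), snd (qry c s (histL \<pi> c s xs i)),
     (inv \<pi> (fst (qry c s (histL \<pi> c s xs i))) < inv \<pi> (snd (qry c s (histL \<pi> c s xs i)))) \<noteq> xs ! i)"
  (is "_ \<Longrightarrow> _ = ?r")
proof -
  assume "i < k"
  then have "histL \<pi> c s xs k ! i = take (Suc i) (histL \<pi> c s xs k) ! i" by simp
  also have "\<dots> = histL \<pi> c s xs (Suc i) ! i" using \<open>i < k\<close> by (subst histL_prefix) auto
  also have "\<dots> = ?r" by (simp add: Let_def nth_append)
  finally show ?thesis .
qed

definition resp :: "ns_hist \<Rightarrow> bool list" where "resp h = map (\<lambda>e. snd (snd e)) h"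

lemma histL_det: "resp (histL \<pi> c s xs k) = resp (histL \<pi>' c s xs' k) \<Longrightarrow> histL \<pi> c s xs k = histL \<pi>' c s xs' k"
  by (induction k) (auto simp: Let_def resp_def)

definition sL :: "(nat \<Rightarrow> nat) \<Rightarrow> ns_code \<Rightarrow> real \<Rightarrow> nat \<Rightarrow> bool list \<Rightarrow> bool" where
  "sL \<pi> c s L xs \<longleftrightarrow> (\<exists>k\<le>L. stp c s (histL \<pi> c s xs k) \<and> (\<forall>j<k. \<not> stp c s (histL \<pi> c s xs j))
      \<and> est c (histL \<pi> c s xs k) = \<pi>)"

lemma sL_inj:
  assumes len: "length xs = L" "length xs' = L" and s: "sL \<pi> c s L xs" "sL \<pi>' c s L xs'"
    and r: "resp (histL \<pi> c s xs L) = resp (histL \<pi>' c s xs' L)"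
  shows "\<pi> = \<pi>' \<and> xs = xs'"
proof -
  have H: "histL \<pi> c s xs L = histL \<pi>' c s xs' L" using r by (rule histL_det)
  have HJ: "histL \<pi> c s xs j = histL \<pi>' c s xs' j" if "j \<le> L" for j
    using H histL_prefix[OF that, of \<pi> c s xs] histL_prefix[OF that, of \<pi>' c s xs'] by metis
  obtain k where k: "k \<le> L" "stp c s (histL \<pi> c s xs k)" "\<forall>j<k. \<not> stp c s (histL \<pi> c s xs j)"
      "est c (histL \<pi> c s xs k) = \<pi>" using s(1) by (auto simp: sL_def)
  obtain k' where k': "k' \<le> L" "stp c s (histL \<pi>' c s xs' k')" "\<forall>j<k'. \<not> stp c s (histL \<pi>' c s xs' j)"
      "est c (histL \<pi>' c s xs' k') = \<pi>'" using s(2) by (auto simp: sL_def)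
  have "k = k'"
  proof (rule ccontr)
    assume "k \<noteq> k'"
    then consider "k < k'" | "k' < k" by linarith
    then show False
    proof cases
      case 1 then show False using k k' HJ[of k] by auto
    next
      case 2 then show False using k k' HJ[of k'] by auto
    qed
  qed
  then have pp: "\<pi> = \<pi>'" using k k' HJ[of k] by auto
  have "xs = xs'"
  proof (rule nth_equalityI)
    show "length xs = length xs'" using len by simp
    fix i assume i: "i < length xs"
    then have iL: "i < L" using len by simp
    have "histL \<pi> c s xs L ! i = histL \<pi>' c s xs' L ! i" using H by simp
    note eq = this
    let ?q = "qry c s (histL \<pi> c s xs i)"
    have e1: "histL \<pi> c s xs L ! i = (fst ?q, snd ?q, (inv \<pi> (fst ?q) < inv \<pi> (snd ?q)) \<noteq> xs ! i)"
      by (rule histL_nth[OF iL])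
    have e2: "histL \<pi>' c s xs' L ! i = (fst ?q, snd ?q, (inv \<pi> (fst ?q) < inv \<pi> (snd ?q)) \<noteq> xs' ! i)"
      using histL_nth[OF iL, of \<pi>' c s xs'] HJ[of i] iL pp by simp
    have "((inv \<pi> (fst ?q) < inv \<pi> (snd ?q)) \<noteq> xs ! i) = ((inv \<pi> (fst ?q) < inv \<pi> (snd ?q)) \<noteq> xs' ! i)"
      using eq e1 e2 by simp
    then show "xs ! i = xs' ! i" by blast
  qed
  then show ?thesis using pp by simp
qed

lemma card_len: "card {xs :: bool list. length xs = L} = 2 ^ L"
  using card_lists_length_eq[of "UNIV :: bool set" L] by simp

lemma count_bound:
  assumes P: "finite P" and tau: "0 \<le> \<tau>" and wb: "\<And>xs. length xs = L \<Longrightarrow> \<not> bad xs \<Longrightarrow> wt p xs \<le> \<tau>"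
    and p: "0 \<le> p" "p \<le> 1"
  shows "(\<Sum>\<pi>\<in>P. \<Sum>xs\<in>{xs. length xs = L}. if sL \<pi> c s L xs then wt p xs else 0)
     \<le> \<tau> * 2 ^ L + real (card P) * (\<Sum>xs\<in>{xs. length xs = L}. if bad xs then wt p xs else 0)"
proof -
  let ?X = "{xs :: bool list. length xs = L}"
  let ?A = "{(\<pi>, xs). \<pi> \<in> P \<and> xs \<in> ?X \<and> sL \<pi> c s L xs}"
  have finX: "finite ?X" by (rule finite_len)
  have "(\<Sum>\<pi>\<in>P. \<Sum>xs\<in>?X. if sL \<pi> c s L xs then wt p xs else 0)
     \<le> (\<Sum>\<pi>\<in>P. \<Sum>xs\<in>?X. (if sL \<pi> c s L xs then \<tau> else 0) + (if bad xs then wt p xs else 0))"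
  proof (intro sum_mono)
    fix \<pi> xs assume "xs \<in> ?X"
    then have l: "length xs = L" by simp
    show "(if sL \<pi> c s L xs then wt p xs else 0) \<le> (if sL \<pi> c s L xs then \<tau> else 0) + (if bad xs then wt p xs else 0)"
      using wb[OF l] tau wt_nonneg[OF p, of xs] by (cases "bad xs") auto
  qed
  also have "\<dots> = (\<Sum>\<pi>\<in>P. \<Sum>xs\<in>?X. if sL \<pi> c s L xs then \<tau> else 0)
      + real (card P) * (\<Sum>xs\<in>?X. if bad xs then wt p xs else 0)"
    by (simp add: sum.distrib)
  also have "(\<Sum>\<pi>\<in>P. \<Sum>xs\<in>?X. if sL \<pi> c s L xs then \<tau> else 0) = \<tau> * real (card ?A)"
  proof -
    have "(\<Sum>\<pi>\<in>P. \<Sum>xs\<in>?X. if sL \<pi> c s L xs then \<tau> else 0) = (\<Sum>y\<in>P \<times> ?X. if sL (fst y) c s L (snd y) then \<tau> else 0)"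
      by (simp add: sum.cartesian_product split_def)
    also have "\<dots> = (\<Sum>y\<in>?A. \<tau>)"
    proof -
      have e: "?A = {y \<in> P \<times> ?X. sL (fst y) c s L (snd y)}" by auto
      have f: "finite (P \<times> ?X)" using P finX by simp
      show ?thesis unfolding e by (rule sum.inter_filter[OF f, symmetric])
    qed
    finally show ?thesis by simp
  qed
  also have "card ?A \<le> card ?X"
  proof (rule card_inj_on_le)
    show "inj_on (\<lambda>(\<pi>, xs). resp (histL \<pi> c s xs L)) ?A"
    proof (rule inj_onI)
      fix x y assume x: "x \<in> ?A" and y: "y \<in> ?A"
        and e: "(\<lambda>(\<pi>, xs). resp (histL \<pi> c s xs L)) x = (\<lambda>(\<pi>, xs). resp (histL \<pi> c s xs L)) y"
      obtain \<pi>1 xs1 where x1: "x = (\<pi>1, xs1)" by (cases x)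
      obtain \<pi>2 xs2 where y2: "y = (\<pi>2, xs2)" by (cases y)
      have "\<pi>1 = \<pi>2 \<and> xs1 = xs2"
        by (rule sL_inj[of xs1 L xs2 \<pi>1 c s \<pi>2]) (use x y e x1 y2 in simp_all)
      then show "x = y" using x1 y2 by simp
    qed
    show "(\<lambda>(\<pi>, xs). resp (histL \<pi> c s xs L)) ` ?A \<subseteq> ?X" by (auto simp: resp_def)
  qed (rule finX)
  then have "real (card ?A) \<le> 2 ^ L" using card_len[of L] by simp
  then have "\<tau> * real (card ?A) \<le> \<tau> * 2 ^ L" using tau by (rule mult_left_mono)
  finally show ?thesis by simp
qed



abbreviation "BS p \<equiv> stream_space (measure_pmf (bernoulli_pmf p))"

lemma meas_snth_cs: "(\<lambda>\<omega>. snd \<omega> !! k) \<in> measurable (N \<Otimes>\<^sub>M BS p) (count_space UNIV)"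
  by measurable

lemma meas_cs_comp: "(g :: 'x \<Rightarrow> 'a::countable) \<in> measurable M (count_space UNIV) \<Longrightarrow> (\<lambda>x. f (g x)) \<in> measurable M (count_space UNIV)"
  by (rule measurable_compose[OF _ measurable_count_space])

lemma meas_hist:
  assumes q: "\<And>h. (\<lambda>s. qry c s h) \<in> measurable (seed_dist c) (count_space UNIV)"
  shows "(\<lambda>\<omega>. ns_hist \<pi> c (fst \<omega>) (snd \<omega>) k) \<in> measurable (seed_dist c \<Otimes>\<^sub>M BS p) (count_space UNIV)"
proof (induction k)
  case 0 then show ?case by simp
next
  case (Suc k)
  have "(\<lambda>\<omega>. (\<lambda>h \<omega>. h @ [(fst (qry c (fst \<omega>) h), snd (qry c (fst \<omega>) h),
           (inv \<pi> (fst (qry c (fst \<omega>) h)) < inv \<pi> (snd (qry c (fst \<omega>) h))) \<noteq> snd \<omega> !! k)])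
        (ns_hist \<pi> c (fst \<omega>) (snd \<omega>) k) \<omega>) \<in> measurable (seed_dist c \<Otimes>\<^sub>M BS p) (count_space UNIV)"
  proof (rule measurable_compose_countable'[where I=UNIV, OF _ Suc.IH])
    fix h :: ns_hist
    have qm: "(\<lambda>\<omega>. qry c (fst \<omega>) h) \<in> measurable (seed_dist c \<Otimes>\<^sub>M BS p) (count_space UNIV)"
      using measurable_compose[OF measurable_fst q, of h "BS p"] by (simp add: comp_def)
    show "(\<lambda>\<omega>. h @ [(fst (qry c (fst \<omega>) h), snd (qry c (fst \<omega>) h),
           (inv \<pi> (fst (qry c (fst \<omega>) h)) < inv \<pi> (snd (qry c (fst \<omega>) h))) \<noteq> snd \<omega> !! k)])
        \<in> measurable (seed_dist c \<Otimes>\<^sub>M BS p) (count_space UNIV)"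
    proof (rule measurable_compose_countable'[where I=UNIV and g="\<lambda>\<omega>. qry c (fst \<omega>) h", OF _ qm])
      fix q :: "nat \<times> nat"
      show "(\<lambda>\<omega>. h @ [(fst q, snd q, (inv \<pi> (fst q) < inv \<pi> (snd q)) \<noteq> snd \<omega> !! k)])
          \<in> measurable (seed_dist c \<Otimes>\<^sub>M BS p) (count_space UNIV)"
        by (rule meas_cs_comp[OF meas_snth_cs])
    qed simp
  qed simp
  then show ?case by (simp only: ns_hist.simps Let_def)
qed


lemma ns_M_enat: "ns_M \<pi> c s z = enat k \<longleftrightarrow> stp c s (ns_hist \<pi> c s z k) \<and> (\<forall>j<k. \<not> stp c s (ns_hist \<pi> c s z j))"
proof
  assume a: "ns_M \<pi> c s z = enat k"
  then have ex: "\<exists>k. stp c s (ns_hist \<pi> c s z k)" by (auto simp: ns_M_def split: if_splits)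
  then have k: "k = (LEAST k. stp c s (ns_hist \<pi> c s z k))" using a by (simp add: ns_M_def)
  show "stp c s (ns_hist \<pi> c s z k) \<and> (\<forall>j<k. \<not> stp c s (ns_hist \<pi> c s z j))"
    using LeastI_ex[OF ex] not_less_Least k by auto
next
  assume a: "stp c s (ns_hist \<pi> c s z k) \<and> (\<forall>j<k. \<not> stp c s (ns_hist \<pi> c s z j))"
  then have "(LEAST k. stp c s (ns_hist \<pi> c s z k)) = k"
    by (intro Least_equality) (auto simp: not_less[symmetric])
  then show "ns_M \<pi> c s z = enat k" using a by (auto simp: ns_M_def)
qed

lemma ns_M_inf: "ns_M \<pi> c s z = \<infinity> \<longleftrightarrow> (\<forall>k. \<not> stp c s (ns_hist \<pi> c s z k))"
  by (simp add: ns_M_def)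

lemma succ_iff: "(ns_M \<pi> c s z \<noteq> \<infinity> \<and> est c (ns_hist \<pi> c s z (the_enat (ns_M \<pi> c s z))) = \<pi>) \<longleftrightarrow>
   (\<exists>k. stp c s (ns_hist \<pi> c s z k) \<and> (\<forall>j<k. \<not> stp c s (ns_hist \<pi> c s z j)) \<and> est c (ns_hist \<pi> c s z k) = \<pi>)"
proof
  assume a: "ns_M \<pi> c s z \<noteq> \<infinity> \<and> est c (ns_hist \<pi> c s z (the_enat (ns_M \<pi> c s z))) = \<pi>"
  then obtain k where k: "ns_M \<pi> c s z = enat k" by auto
  then show "\<exists>k. stp c s (ns_hist \<pi> c s z k) \<and> (\<forall>j<k. \<not> stp c s (ns_hist \<pi> c s z j)) \<and> est c (ns_hist \<pi> c s z k) = \<pi>"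
    using a ns_M_enat[of \<pi> c s z k] by auto
next
  assume "\<exists>k. stp c s (ns_hist \<pi> c s z k) \<and> (\<forall>j<k. \<not> stp c s (ns_hist \<pi> c s z j)) \<and> est c (ns_hist \<pi> c s z k) = \<pi>"
  then obtain k where "stp c s (ns_hist \<pi> c s z k) \<and> (\<forall>j<k. \<not> stp c s (ns_hist \<pi> c s z j))" "est c (ns_hist \<pi> c s z k) = \<pi>" by blast
  then show "ns_M \<pi> c s z \<noteq> \<infinity> \<and> est c (ns_hist \<pi> c s z (the_enat (ns_M \<pi> c s z))) = \<pi>"
    using ns_M_enat[of \<pi> c s z k] by auto
qed

lemma meas_stp:
  assumes q: "\<And>h. (\<lambda>s. qry c s h) \<in> measurable (seed_dist c) (count_space UNIV)"
    and st: "\<And>h. (\<lambda>s. stp c s h) \<in> measurable (seed_dist c) (count_space UNIV)"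
  shows "Measurable.pred (seed_dist c \<Otimes>\<^sub>M BS p) (\<lambda>\<omega>. stp c (fst \<omega>) (ns_hist \<pi> c (fst \<omega>) (snd \<omega>) k))"
proof (rule measurable_compose_countable'[where I=UNIV and f="\<lambda>h \<omega>. stp c (fst \<omega>) h", OF _ meas_hist[OF q]])
  fix h show "(\<lambda>\<omega>. stp c (fst \<omega>) h) \<in> measurable (seed_dist c \<Otimes>\<^sub>M BS p) (count_space UNIV)"
    using measurable_compose[OF measurable_fst st, of h "BS p"] by (simp add: comp_def)
qed simp

lemma meas_est:
  assumes q: "\<And>h. (\<lambda>s. qry c s h) \<in> measurable (seed_dist c) (count_space UNIV)"
  shows "Measurable.pred (seed_dist c \<Otimes>\<^sub>M BS p) (\<lambda>\<omega>. est c (ns_hist \<pi> c (fst \<omega>) (snd \<omega>) k) = \<pi>)"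
  by (rule meas_cs_comp[OF meas_hist[OF q]])



lemma code_bound:
  assumes code: "is_ns_code p R n c" and p: "0 \<le> p" "p \<le> 1" and R: "R > 0" and n: "n \<ge> 1"
    and tau: "0 \<le> \<tau>" and wb: "\<And>xs. length xs = L \<Longrightarrow> \<not> bad xs \<Longrightarrow> wt p xs \<le> \<tau>"
  shows "ns_max_error p n c \<ge> 1 - \<tau> * 2 ^ L / fact n
           - (\<Sum>xs\<in>{xs. length xs = L}. if bad xs then wt p xs else 0)
           - (real n * log 2 (real n) / R) / (real L + 1)"
proof -
  define m where "m = real n * log 2 (real n) / R"
  have m0: "0 \<le> m" using n R by (simp add: m_def)
  define \<beta> where "\<beta> = (\<Sum>xs\<in>{xs. length xs = L}. if bad xs then wt p xs else 0)"
  define P where "P = {\<pi>. \<pi> permutes {..<n}}"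
  have finP: "finite P" and cardP: "card P = fact n" and P_ne: "P \<noteq> {}"
    using finite_permutations[of "{..<n}"] card_permutations[of "{..<n}" n] permutes_id[of "{..<n}"]
    by (auto simp: P_def intro!: exI[of _ id])
  have ps: "prob_space (seed_dist c)" and q: "\<And>h. (\<lambda>s. qry c s h) \<in> measurable (seed_dist c) (count_space UNIV)"
    and st: "\<And>h. (\<lambda>s. stp c s h) \<in> measurable (seed_dist c) (count_space UNIV)"
    and Mb: "\<And>\<pi>. \<pi> \<in> P \<Longrightarrow> (\<integral>\<^sup>+ \<omega>. ennreal_of_enat (ns_M \<pi> c (fst \<omega>) (snd \<omega>)) \<partial>ns_space p c) \<le> ennreal m"
    using code by (auto simp: is_ns_code_def P_def m_def)
  interpret S1: prob_space "seed_dist c" by (rule ps)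
  interpret S2: prob_space "BS p" by (rule prob_space.prob_space_stream_space[OF prob_space_measure_pmf])
  interpret PP: pair_prob_space "seed_dist c" "BS p" ..
  have Om: "ns_space p c = seed_dist c \<Otimes>\<^sub>M BS p" by (simp add: ns_space_def)
  note [measurable] = meas_stp[OF q st] meas_est[OF q]
  define Succ where "Succ \<pi> = {\<omega> \<in> space (seed_dist c \<Otimes>\<^sub>M BS p). \<exists>k. stp c (fst \<omega>) (ns_hist \<pi> c (fst \<omega>) (snd \<omega>) k)
      \<and> (\<forall>j<k. \<not> stp c (fst \<omega>) (ns_hist \<pi> c (fst \<omega>) (snd \<omega>) j)) \<and> est c (ns_hist \<pi> c (fst \<omega>) (snd \<omega>) k) = \<pi>}" for \<pi>
  define A where "A \<pi> = {\<omega> \<in> space (seed_dist c \<Otimes>\<^sub>M BS p). \<exists>k\<le>L. stp c (fst \<omega>) (ns_hist \<pi> c (fst \<omega>) (snd \<omega>) k)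
      \<and> (\<forall>j<k. \<not> stp c (fst \<omega>) (ns_hist \<pi> c (fst \<omega>) (snd \<omega>) j)) \<and> est c (ns_hist \<pi> c (fst \<omega>) (snd \<omega>) k) = \<pi>}" for \<pi>
  define Bg where "Bg \<pi> = {\<omega> \<in> space (seed_dist c \<Otimes>\<^sub>M BS p). \<forall>k\<le>L. \<not> stp c (fst \<omega>) (ns_hist \<pi> c (fst \<omega>) (snd \<omega>) k)}" for \<pi>
  have Succ_m[measurable]: "Succ \<pi> \<in> sets (seed_dist c \<Otimes>\<^sub>M BS p)" for \<pi> unfolding Succ_def by measurable
  have A_m[measurable]: "A \<pi> \<in> sets (seed_dist c \<Otimes>\<^sub>M BS p)" for \<pi> unfolding A_def by measurable
  have Bg_m[measurable]: "Bg \<pi> \<in> sets (seed_dist c \<Otimes>\<^sub>M BS p)" for \<pi> unfolding Bg_def by measurable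
  have err: "ns_error p c \<pi> = 1 - measure (seed_dist c \<Otimes>\<^sub>M BS p) (Succ \<pi>)" for \<pi>
  proof -
    have "{\<omega> \<in> space (ns_space p c). ns_M \<pi> c (fst \<omega>) (snd \<omega>) = \<infinity> \<or>
        est c (ns_hist \<pi> c (fst \<omega>) (snd \<omega>) (the_enat (ns_M \<pi> c (fst \<omega>) (snd \<omega>)))) \<noteq> \<pi>}
       = space (seed_dist c \<Otimes>\<^sub>M BS p) - Succ \<pi>"
      unfolding Succ_def Om using succ_iff[of \<pi> c] by blast
    then show ?thesis unfolding ns_error_def by (simp add: Om PP.prob_compl)
  qed
  have sub: "Succ \<pi> \<subseteq> A \<pi> \<union> Bg \<pi>" for \<pi>
    unfolding Succ_def A_def Bg_def by (auto simp: not_le) (meson le_less_trans not_le)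
  have Bg_bound: "measure (seed_dist c \<Otimes>\<^sub>M BS p) (Bg \<pi>) \<le> m / (real L + 1)" if "\<pi> \<in> P" for \<pi>
  proof -
    have "ennreal (real L + 1) * emeasure (seed_dist c \<Otimes>\<^sub>M BS p) (Bg \<pi>)
        = (\<integral>\<^sup>+\<omega>. ennreal (real L + 1) * indicator (Bg \<pi>) \<omega> \<partial>(seed_dist c \<Otimes>\<^sub>M BS p))"
      by (simp add: nn_integral_cmult_indicator)
    also have "\<dots> \<le> (\<integral>\<^sup>+\<omega>. ennreal_of_enat (ns_M \<pi> c (fst \<omega>) (snd \<omega>)) \<partial>(seed_dist c \<Otimes>\<^sub>M BS p))"
    proof (intro nn_integral_mono)
      fix \<omega> assume "\<omega> \<in> space (seed_dist c \<Otimes>\<^sub>M BS p)"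
      show "ennreal (real L + 1) * indicator (Bg \<pi>) \<omega> \<le> ennreal_of_enat (ns_M \<pi> c (fst \<omega>) (snd \<omega>))"
      proof (cases "\<omega> \<in> Bg \<pi>")
        case True
        show ?thesis
        proof (cases "ns_M \<pi> c (fst \<omega>) (snd \<omega>)")
          case (enat k)
          then have "stp c (fst \<omega>) (ns_hist \<pi> c (fst \<omega>) (snd \<omega>) k)" using ns_M_enat by blast
          then have "L + 1 \<le> k" using True unfolding Bg_def by (metis (no_types, lifting) mem_Collect_eq not_less_eq_eq Suc_eq_plus1)
          then have "ennreal (real L + 1) \<le> ennreal (real k)" by (intro ennreal_leI) simp
          then show ?thesis using True enat by (simp add: ennreal_of_nat_eq_real_of_nat)
        qed simp
      qed simp
    qed
    also have "\<dots> \<le> ennreal m" using Mb[OF that] by (simp add: Om)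
    finally have "ennreal ((real L + 1) * measure (seed_dist c \<Otimes>\<^sub>M BS p) (Bg \<pi>)) \<le> ennreal m"
      by (simp add: PP.emeasure_eq_measure ennreal_mult'')
    then have "(real L + 1) * measure (seed_dist c \<Otimes>\<^sub>M BS p) (Bg \<pi>) \<le> m"
      using m0 by (simp add: ennreal_le_iff)
    then show ?thesis by (simp add: field_simps)
  qed
  have A_sec: "emeasure (BS p) (Pair s -` A \<pi>) = ennreal (\<Sum>xs\<in>{xs. length xs = L}. if sL \<pi> c s L xs then wt p xs else 0)"
    if "s \<in> space (seed_dist c)" for s \<pi>
  proof -
    have "Pair s -` A \<pi> = {z. sL \<pi> c s L (stake L z)}"
    proof (intro set_eqI iffI)
      fix z assume "z \<in> Pair s -` A \<pi>"
      then obtain k where k: "k \<le> L" "stp c s (ns_hist \<pi> c s z k)" "\<forall>j<k. \<not> stp c s (ns_hist \<pi> c s z j)"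
        "est c (ns_hist \<pi> c s z k) = \<pi>" unfolding A_def by auto
      then show "z \<in> {z. sL \<pi> c s L (stake L z)}" unfolding sL_def
        by (intro CollectI exI[of _ k]) (simp add: hist_histL[symmetric])
    next
      fix z assume "z \<in> {z. sL \<pi> c s L (stake L z)}"
      then obtain k where k: "k \<le> L" "stp c s (histL \<pi> c s (stake L z) k)" "\<forall>j<k. \<not> stp c s (histL \<pi> c s (stake L z) j)"
        "est c (histL \<pi> c s (stake L z) k) = \<pi>" unfolding sL_def by auto
      have "\<forall>j<k. \<not> stp c s (ns_hist \<pi> c s z j)"
      proof (intro allI impI)
        fix j assume "j < k"
        then show "\<not> stp c s (ns_hist \<pi> c s z j)" using k hist_histL[of j L \<pi> c s z] by simp
      qed
      then show "z \<in> Pair s -` A \<pi>" unfolding A_def using that k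
        by (auto simp: space_pair_measure space_stream_space hist_histL intro!: exI[of _ k])
    qed
    also have "emeasure (BS p) {z. sL \<pi> c s L (stake L z)}
       = (\<integral>\<^sup>+z. ennreal (if sL \<pi> c s L (stake L z) then 1 else 0) \<partial>BS p)"
    proof -
      have "{z. sL \<pi> c s L (stake L z)} \<in> sets (BS p)"
      proof -
        have "{z \<in> space (BS p). sL \<pi> c s L (stake L z)} \<in> sets (BS p)" by measurable
        then show ?thesis by (simp add: space_stream_space)
      qed
      then have "emeasure (BS p) {z. sL \<pi> c s L (stake L z)} = (\<integral>\<^sup>+z. indicator {z. sL \<pi> c s L (stake L z)} z \<partial>BS p)"
        by simp
      also have "\<dots> = (\<integral>\<^sup>+z. ennreal (if sL \<pi> c s L (stake L z) then 1 else 0) \<partial>BS p)"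
        by (intro nn_integral_cong) (simp add: indicator_def)
      finally show ?thesis .
    qed
    also have "\<dots> = ennreal (\<Sum>xs\<in>{xs. length xs = L}. (if sL \<pi> c s L xs then 1 else 0) * wt p xs)"
      by (rule stake_integral[OF p]) simp
    also have "(\<Sum>xs\<in>{xs. length xs = L}. (if sL \<pi> c s L xs then 1 else 0) * wt p xs)
        = (\<Sum>xs\<in>{xs. length xs = L}. if sL \<pi> c s L xs then wt p xs else 0)"
      by (intro sum.cong) auto
    finally show ?thesis .
  qed
  have A_sum: "(\<Sum>\<pi>\<in>P. emeasure (seed_dist c \<Otimes>\<^sub>M BS p) (A \<pi>)) \<le> ennreal (\<tau> * 2 ^ L + real (card P) * \<beta>)"
  proof -
    have "(\<Sum>\<pi>\<in>P. emeasure (seed_dist c \<Otimes>\<^sub>M BS p) (A \<pi>))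
        = (\<Sum>\<pi>\<in>P. \<integral>\<^sup>+s. emeasure (BS p) (Pair s -` A \<pi>) \<partial>seed_dist c)"
      by (intro sum.cong refl S2.emeasure_pair_measure_alt A_m)
    also have "\<dots> = (\<integral>\<^sup>+s. (\<Sum>\<pi>\<in>P. emeasure (BS p) (Pair s -` A \<pi>)) \<partial>seed_dist c)"
      by (rule nn_integral_sum[symmetric]) (rule S2.measurable_emeasure_Pair[OF A_m])
    also have "\<dots> \<le> (\<integral>\<^sup>+s. ennreal (\<tau> * 2 ^ L + real (card P) * \<beta>) \<partial>seed_dist c)"
    proof (intro nn_integral_mono)
      fix s assume s: "s \<in> space (seed_dist c)"
      have "(\<Sum>\<pi>\<in>P. emeasure (BS p) (Pair s -` A \<pi>))
          = (\<Sum>\<pi>\<in>P. ennreal (\<Sum>xs\<in>{xs. length xs = L}. if sL \<pi> c s L xs then wt p xs else 0))"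
        using A_sec[OF s] by simp
      also have "\<dots> = ennreal (\<Sum>\<pi>\<in>P. \<Sum>xs\<in>{xs. length xs = L}. if sL \<pi> c s L xs then wt p xs else 0)"
        by (rule sum_ennreal) (auto intro!: sum_nonneg wt_nonneg[OF p])
      also have "\<dots> \<le> ennreal (\<tau> * 2 ^ L + real (card P) * \<beta>)"
        unfolding \<beta>_def by (intro ennreal_leI count_bound[OF finP tau wb p])
      finally show "(\<Sum>\<pi>\<in>P. emeasure (BS p) (Pair s -` A \<pi>)) \<le> ennreal (\<tau> * 2 ^ L + real (card P) * \<beta>)" .
    qed
    also have "\<dots> = ennreal (\<tau> * 2 ^ L + real (card P) * \<beta>)"
      by (simp add: S1.emeasure_space_1)
    finally show ?thesis .
  qed
  have K0: "0 \<le> \<tau> * 2 ^ L + real (card P) * \<beta>"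
    using tau by (auto simp: \<beta>_def intro!: add_nonneg_nonneg mult_nonneg_nonneg sum_nonneg wt_nonneg[OF p])
  have "(\<Sum>\<pi>\<in>P. measure (seed_dist c \<Otimes>\<^sub>M BS p) (A \<pi>)) \<le> \<tau> * 2 ^ L + real (card P) * \<beta>"
  proof -
    have "ennreal (\<Sum>\<pi>\<in>P. measure (seed_dist c \<Otimes>\<^sub>M BS p) (A \<pi>)) = (\<Sum>\<pi>\<in>P. emeasure (seed_dist c \<Otimes>\<^sub>M BS p) (A \<pi>))"
      by (simp add: PP.emeasure_eq_measure sum_ennreal)
    then have "ennreal (\<Sum>\<pi>\<in>P. measure (seed_dist c \<Otimes>\<^sub>M BS p) (A \<pi>)) \<le> ennreal (\<tau> * 2 ^ L + real (card P) * \<beta>)"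
      using A_sum by simp
    then show ?thesis using K0 by (simp add: ennreal_le_iff)
  qed
  moreover have "(\<Sum>\<pi>\<in>P. measure (seed_dist c \<Otimes>\<^sub>M BS p) (Bg \<pi>)) \<le> real (card P) * (m / (real L + 1))"
    using sum_mono[of P "\<lambda>\<pi>. measure (seed_dist c \<Otimes>\<^sub>M BS p) (Bg \<pi>)" "\<lambda>_. m / (real L + 1)"] Bg_bound by simp
  moreover have "(\<Sum>\<pi>\<in>P. measure (seed_dist c \<Otimes>\<^sub>M BS p) (Succ \<pi>))
      \<le> (\<Sum>\<pi>\<in>P. measure (seed_dist c \<Otimes>\<^sub>M BS p) (A \<pi>)) + (\<Sum>\<pi>\<in>P. measure (seed_dist c \<Otimes>\<^sub>M BS p) (Bg \<pi>))"
  proof -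
    have "measure (seed_dist c \<Otimes>\<^sub>M BS p) (Succ \<pi>) \<le> measure (seed_dist c \<Otimes>\<^sub>M BS p) (A \<pi>) + measure (seed_dist c \<Otimes>\<^sub>M BS p) (Bg \<pi>)" for \<pi>
      using PP.finite_measure_mono[OF sub, of \<pi>] measure_subadditive[OF A_m[of \<pi>] Bg_m[of \<pi>]] PP.emeasure_finite by simp
    then show ?thesis by (simp add: sum.distrib[symmetric] sum_mono)
  qed
  ultimately have "(\<Sum>\<pi>\<in>P. measure (seed_dist c \<Otimes>\<^sub>M BS p) (Succ \<pi>)) \<le> \<tau> * 2 ^ L + real (card P) * \<beta> + real (card P) * (m / (real L + 1))"
    by linarith
  then have "(\<Sum>\<pi>\<in>P. ns_error p c \<pi>) \<ge> real (card P) - (\<tau> * 2 ^ L + real (card P) * \<beta> + real (card P) * (m / (real L + 1)))"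
    by (simp add: err sum_subtractf)
  moreover have "(\<Sum>\<pi>\<in>P. ns_error p c \<pi>) \<le> real (card P) * ns_max_error p n c"
  proof -
    have "(\<Sum>\<pi>\<in>P. ns_error p c \<pi>) \<le> (\<Sum>\<pi>\<in>P. ns_max_error p n c)"
      unfolding ns_max_error_def P_def[symmetric] using finP by (intro sum_mono Max_ge) auto
    then show ?thesis by simp
  qed
  ultimately have "real (card P) * (1 - \<tau> * 2 ^ L / real (card P) - \<beta> - m / (real L + 1)) \<le> real (card P) * ns_max_error p n c"
    using P_ne finP by (simp add: algebra_simps)
  then have "1 - \<tau> * 2 ^ L / real (card P) - \<beta> - m / (real L + 1) \<le> ns_max_error p n c"
    using P_ne finP by (simp add: card_gt_0_iff)
  then show ?thesis by (simp add: cardP m_def \<beta>_def)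
qed



lemma pow_fact_le_exp: assumes "0 \<le> (x::real)" shows "x^n / fact n \<le> exp x"
proof -
  have s: "(\<lambda>k. x^k / fact k) sums exp x"
    using exp_converges[of x] by (simp add: divide_inverse mult.commute)
  have "sum (\<lambda>k. x^k / fact k) {n} \<le> suminf (\<lambda>k. x^k / fact k)"
    by (rule sum_le_suminf) (use s assms in \<open>auto simp: sums_summable\<close>)
  then show ?thesis using sums_unique[OF s] by simp
qed

lemma fact_growth_pt:
  assumes n: "n \<ge> 1"
  shows "real n powr (\<gamma> * real n) / fact n \<le> (exp 1 * real n powr (\<gamma> - 1)) ^ n"
proof -
  have np: "real n > 0" using n by simp
  have "(exp 1 * real n powr (\<gamma> - 1)) ^ n = exp (real n) * real n powr ((\<gamma> - 1) * real n)"
    using np by (simp add: power_mult_distrib exp_of_nat_mult[symmetric] powr_powr[symmetric] powr_realpow[symmetric])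
  also have "real n powr ((\<gamma> - 1) * real n) = real n powr (\<gamma> * real n) / real n ^ n"
    using np by (simp add: algebra_simps powr_diff powr_realpow)
  finally have e: "(exp 1 * real n powr (\<gamma> - 1)) ^ n = real n powr (\<gamma> * real n) * (exp (real n) / real n ^ n)"
    by simp
  have "1 / fact n \<le> exp (real n) / real n ^ n"
    using pow_fact_le_exp[of "real n" n] np by (simp add: field_simps)
  then have "real n powr (\<gamma> * real n) * (1 / fact n) \<le> real n powr (\<gamma> * real n) * (exp (real n) / real n ^ n)"
    by (rule mult_left_mono) simp
  then show ?thesis using e by simp
qed

lemma fact_growth:
  assumes g: "\<gamma> < 1" and e: "\<epsilon> > 0"
  shows "eventually (\<lambda>n. real n powr (\<gamma> * real n) / fact n \<le> \<epsilon>) sequentially"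
proof -
  have t: "((\<lambda>n. real n powr (\<gamma> - 1)) \<longlongrightarrow> 0) sequentially"
    by (rule tendsto_neg_powr) (use g filterlim_real_sequentially in auto)
  have "((\<lambda>n. exp 1 * real n powr (\<gamma> - 1)) \<longlongrightarrow> exp 1 * 0) sequentially"
    by (intro tendsto_mult tendsto_const t)
  then have l: "((\<lambda>n. exp 1 * real n powr (\<gamma> - 1)) \<longlongrightarrow> 0) sequentially" by simp
  have ev1: "eventually (\<lambda>n. exp 1 * real n powr (\<gamma> - 1) < 1/2) sequentially"
    by (rule order_tendstoD(2)[OF l]) simp
  have "((\<lambda>n. (1/2::real) ^ n) \<longlongrightarrow> 0) sequentially" by (rule LIMSEQ_realpow_zero) auto
  then have ev2: "eventually (\<lambda>n. (1/2::real) ^ n < \<epsilon>) sequentially"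
    using e by (intro order_tendstoD(2)) auto
  have ev3: "eventually (\<lambda>n. n \<ge> (1::nat)) sequentially" by (rule eventually_ge_at_top)
  show ?thesis using ev1 ev2 ev3
  proof eventually_elim
    case (elim n)
    have "real n powr (\<gamma> * real n) / fact n \<le> (exp 1 * real n powr (\<gamma> - 1)) ^ n"
      by (rule fact_growth_pt) (use elim in auto)
    also have "\<dots> \<le> (1/2) ^ n"
      using elim by (intro power_mono) auto
    finally show ?case using elim by simp
  qed
qed

lemma floor_bounds:
  assumes "0 \<le> x" shows "real (nat \<lfloor>x\<rfloor>) \<le> x" "x \<le> real (nat \<lfloor>x\<rfloor>) + 1"
  using assms by linarith+

lemma achievable_le:
  assumes p: "0 \<le> p" "p < 1/2" and ach: "ns_achievable p R"
  shows "R \<le> 1 - bin_entropy p"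
proof (rule ccontr)
  assume "\<not> R \<le> 1 - bin_entropy p"
  then have RC: "R > 1 - bin_entropy p" by simp
  define C where "C = 1 - bin_entropy p"
  from ach obtain c where R0: "R > 0" and codes: "\<And>n. n \<ge> 2 \<Longrightarrow> is_ns_code p R n (c n)"
    and lim: "(\<lambda>n. ns_max_error p n (c n)) \<longlonglongrightarrow> 0"
    unfolding ns_achievable_def by blast
  define \<delta> where "\<delta> = (R - C) / 2"
  have d0: "\<delta> > 0" using RC by (simp add: \<delta>_def C_def)
  obtain \<theta> where th: "\<theta> < p" and thw: "\<And>xs. real (cnt xs) \<ge> \<theta> * real (length xs) \<Longrightarrow>
           wt p xs \<le> 2 powr (real (length xs) * (\<delta> - bin_entropy p))"
    using wt_typical[OF p d0] by blast
  define D where "D = max (C + \<delta>) (R / 2)"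
  have D0: "D > 0" and DR: "D < R" and CD: "C + \<delta> \<le> D"
    using R0 RC by (auto simp: D_def \<delta>_def C_def field_simps)
  define lam where "lam = 2 / (R + D)"
  have lam0: "lam > 0" using R0 D0 by (simp add: lam_def)
  define \<kappa> where "\<kappa> = (R + D) / (2 * R)"
  have k1: "\<kappa> < 1" using DR R0 by (simp add: \<kappa>_def)
  have k0: "\<kappa> > 0" using D0 R0 by (simp add: \<kappa>_def)
  define \<gamma> where "\<gamma> = lam * D"
  have g1: "\<gamma> < 1" using DR D0 R0 by (simp add: \<gamma>_def lam_def field_simps)
  define L where "L n = nat \<lfloor>lam * real n * log 2 (real n)\<rfloor>" for n :: nat
  define W where "W = 4 * (p * (1 - p)) / ((p - \<theta>)^2 * (1 - \<kappa>)) + 1"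
  have W0: "W > 0"
  proof -
    have "0 \<le> 4 * (p * (1 - p)) / ((p - \<theta>)^2 * (1 - \<kappa>))"
      using p th k1 by (intro divide_nonneg_pos mult_nonneg_nonneg mult_pos_pos) auto
    then show ?thesis by (simp add: W_def)
  qed
  have bound: "ns_max_error p n (c n) \<ge> (1 - \<kappa>) / 2"
    if n2: "n \<ge> 2" and fg: "real n powr (\<gamma> * real n) / fact n \<le> (1 - \<kappa>) / 4"
      and nW: "lam * real n - 1 \<ge> W" for n
  proof -
    have nlog: "log 2 (real n) \<ge> 1" using n2 by simp
    have x0: "0 \<le> lam * real n * log 2 (real n)" using lam0 nlog by simp
    note fl = floor_bounds[OF x0, folded L_def]
    have Lge: "real (L n) \<ge> W"
    proof -
      have "lam * real n \<le> lam * real n * log 2 (real n)" using lam0 nlog n2 by simp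
      then show ?thesis using fl(2) nW by linarith
    qed
    have Lpos: "L n > 0" using Lge W0 by (metis of_nat_0 not_gr0 not_le)
    define \<tau> where "\<tau> = 2 powr (real (L n) * (\<delta> - bin_entropy p))"
    define bad where "bad xs = (real (cnt xs) < \<theta> * real (L n))" for xs
    have cb: "ns_max_error p n (c n) \<ge> 1 - \<tau> * 2 ^ L n / fact n
           - (\<Sum>xs\<in>{xs. length xs = L n}. if bad xs then wt p xs else 0)
           - (real n * log 2 (real n) / R) / (real (L n) + 1)"
    proof (rule code_bound[OF codes[OF n2]])
      fix xs :: "bool list" assume "length xs = L n" "\<not> bad xs"
      then show "wt p xs \<le> \<tau>" using thw[of xs] by (simp add: \<tau>_def bad_def not_less)
    qed (use p R0 n2 in \<open>auto simp: \<tau>_def\<close>)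
    have i1: "\<tau> * 2 ^ L n / fact n \<le> (1 - \<kappa>) / 4"
    proof -
      have "\<tau> * 2 ^ L n = 2 powr (real (L n) * (C + \<delta>))"
        by (simp add: \<tau>_def C_def powr_realpow[symmetric] powr_add[symmetric] algebra_simps)
      also have "\<dots> \<le> 2 powr (lam * real n * log 2 (real n) * D)"
      proof (rule powr_mono)
        have "real (L n) * (C + \<delta>) \<le> real (L n) * D" using CD by (intro mult_left_mono) auto
        also have "\<dots> \<le> lam * real n * log 2 (real n) * D" using fl(1) D0 by (intro mult_right_mono) auto
        finally show "real (L n) * (C + \<delta>) \<le> lam * real n * log 2 (real n) * D" .
      qed simp
      also have "\<dots> = real n powr (\<gamma> * real n)"
      proof -
        have "2 powr (lam * real n * log 2 (real n) * D) = (2 powr log 2 (real n)) powr (\<gamma> * real n)"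
          by (simp add: powr_powr \<gamma>_def algebra_simps)
        also have "\<dots> = real n powr (\<gamma> * real n)" using n2 by simp
        finally show ?thesis .
      qed
      finally have "\<tau> * 2 ^ L n / fact n \<le> real n powr (\<gamma> * real n) / fact n"
        by (simp add: divide_right_mono)
      then show ?thesis using fg by linarith
    qed
    have i2: "(\<Sum>xs\<in>{xs. length xs = L n}. if bad xs then wt p xs else 0) \<le> (1 - \<kappa>) / 4"
    proof -
      have "(\<Sum>xs\<in>{xs. length xs = L n}. if bad xs then wt p xs else 0) \<le> p * (1 - p) / ((p - \<theta>)^2 * real (L n))"
        unfolding bad_def by (rule cheb) (use p th Lpos in auto)
      also have "\<dots> \<le> (1 - \<kappa>) / 4"
      proof -
        have pos: "(p - \<theta>)^2 > 0" using th by simp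
        have "4 * (p * (1 - p)) / ((p - \<theta>)^2 * (1 - \<kappa>)) \<le> real (L n)" using Lge W_def by simp
        then have "4 * (p * (1 - p)) \<le> real (L n) * ((p - \<theta>)^2 * (1 - \<kappa>))"
          using pos k1 by (simp add: divide_le_eq mult.commute)
        then show ?thesis using pos k1 Lpos by (simp add: divide_le_eq field_simps)
      qed
      finally show ?thesis .
    qed
    have i3: "(real n * log 2 (real n) / R) / (real (L n) + 1) \<le> \<kappa>"
    proof -
      have pos: "0 < real n * log 2 (real n)" using n2 nlog by simp
      have "(real n * log 2 (real n) / R) / (real (L n) + 1) \<le> (real n * log 2 (real n) / R) / (lam * real n * log 2 (real n))"
      proof (rule divide_left_mono)
        show "0 < (real (L n) + 1) * (lam * real n * log 2 (real n))"
          using pos lam0 nlog n2 by (intro mult_pos_pos) (auto simp: mult.assoc)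
      qed (use fl(2) pos R0 in auto)
      also have "\<dots> = \<kappa>"
      proof -
        define X where "X = real n * log 2 (real n)"
        have X0: "X > 0" using pos by (simp add: X_def)
        have "(X / R) / (lam * X) = 1 / (R * lam)" using X0 R0 lam0 by (simp add: field_simps)
        also have "\<dots> = \<kappa>" using R0 D0 by (simp add: lam_def \<kappa>_def field_simps)
        finally show ?thesis by (simp add: X_def mult.assoc)
      qed
      finally show ?thesis .
    qed
    have gen: "\<And>a b d e. 1 - a - b - d \<le> e \<Longrightarrow> a \<le> (1 - \<kappa>) / 4 \<Longrightarrow> b \<le> (1 - \<kappa>) / 4 \<Longrightarrow> d \<le> \<kappa> \<Longrightarrow> (1 - \<kappa>) / 2 \<le> (e::real)"
      by (simp add: field_simps)
    show ?thesis by (rule gen[OF cb i1 i2 i3])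
  qed
  have ev1: "eventually (\<lambda>n. real n powr (\<gamma> * real n) / fact n \<le> (1 - \<kappa>) / 4) sequentially"
    by (rule fact_growth[OF g1]) (use k1 in simp)
  have ev2: "eventually (\<lambda>n. lam * real n - 1 \<ge> W) sequentially"
  proof -
    have "eventually (\<lambda>n. real n \<ge> (W + 1) / lam) sequentially"
      using filterlim_real_sequentially by (simp add: filterlim_at_top)
    then show ?thesis
      by eventually_elim (use lam0 in \<open>simp add: field_simps\<close>)
  qed
  have ev3: "eventually (\<lambda>n. n \<ge> (2::nat)) sequentially" by (rule eventually_ge_at_top)
  have ev4: "eventually (\<lambda>n. ns_max_error p n (c n) < (1 - \<kappa>) / 2) sequentially"
    by (rule order_tendstoD(2)[OF lim]) (use k1 in simp)
  have "eventually (\<lambda>n. False) sequentially" using ev1 ev2 ev3 ev4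
    by eventually_elim (use bound in force)
  then show False by simp
qed

theorem theorem3:
  fixes p :: real
  assumes "0 \<le> p" and "p < 1/2"
  shows "ns_capacity p \<le> ereal (1 - bin_entropy p)"
  unfolding ns_capacity_def
  using achievable_le[OF assms] by (intro Sup_least) auto

end
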